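(* Let $p$ be an integer with $p\leq-1$ or $p\geq2$, and let $r\geq1$ be an integer. For $p\leq -1$ define \[ b^{-}_{K_p,r}=-\frac{1}{r^2}\sum_{d\mid r}\mu\!\left(\tfrac{r}{d}\right)\binom{3d-1}{d-1},\qquad b^{+}_{K_p,r}=\frac{1}{r^2}\sum_{d\mid r}\mu\!\left(\tfrac{r}{d}\right)\binom{(2|p|+1)d-1}{d-1}, \] and for $p\geq2$ define \[ b^{-}_{K_p,r}=-\frac{1}{r^2}\sum_{d\mid r}\mu\!\left(\tfrac{r}{d}\right)(-1)^{d+1}\binom{2d-1}{d-1},\qquad b^{+}_{K_p,r}=\frac{1}{r^2}\sum_{d\mid r}\mu\!\left(\tfrac{r}{d}\right)(-1)^{d}\binom{(2p+2)d-1}{d-1}. \] Then $b^{-}_{K_p,r}$ and $b^{+}_{K_p,r}$ are integers.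
   Context: $\mu$ is the Möbius function and the sums run over positive divisors $d$ of $r$. (These are the extremal BPS invariants of the twist knots $K_p$ found by Garoufalidis–Kucharski–Sułkowski.) *)

theory Defs
  imports Complex_Main "HOL-Computational_Algebra.Squarefree" "HOL-Computational_Algebra.Primes"
begin

definition moebius :: "nat \<Rightarrow> int" where
  "moebius n = (if squarefree n then (-1) ^ card (prime_factors n) else 0)"

definition b_minus :: "int \<Rightarrow> nat \<Rightarrow> rat" where
  "b_minus p r =
    (if p \<le> -1 then
       - (1 / of_nat (r^2)) * (\<Sum>d | d dvd r. of_int (moebius (r div d)) * of_nat ((3*d - 1) choose (d - 1)))
     else
       - (1 / of_nat (r^2)) * (\<Sum>d | d dvd r. of_int (moebius (r div d)) * (-1)^(d+1) * of_nat ((2*d - 1) choose (d - 1))))"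

definition b_plus :: "int \<Rightarrow> nat \<Rightarrow> rat" where
  "b_plus p r =
    (if p \<le> -1 then
       (1 / of_nat (r^2)) * (\<Sum>d | d dvd r. of_int (moebius (r div d)) * of_nat (((2 * nat \<bar>p\<bar> + 1)*d - 1) choose (d - 1)))
     else
       (1 / of_nat (r^2)) * (\<Sum>d | d dvd r. of_int (moebius (r div d)) * (-1)^d * of_nat (((2 * nat p + 2)*d - 1) choose (d - 1))))"

end

theory Submission
  imports Defs
begin


lemma moeb_zero:
  assumes "prime (p::nat)" "p^2 dvd n"
  shows "moebius n = 0"
proof -
  have "\<not> squarefree n"
    using assms by (intro not_squarefreeI[of p]) auto
  thus ?thesis by (simp add: moebius_def)
qed

lemma moeb_mult:
  assumes "prime (p::nat)" "\<not> p dvd q" "q > 0"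
  shows "moebius (p*q) = - moebius q"
proof -
  have cop: "coprime p q" using assms prime_imp_coprime by blast
  have sq: "squarefree (p*q) \<longleftrightarrow> squarefree q"
    using squarefree_multD(2)[of p q] squarefree_mult_coprime[OF cop] squarefree_prime[OF assms(1)]
    by blast
  have pf: "prime_factors (p*q) = insert p (prime_factors q)"
    using assms prime_factors_product[of p q] prime_prime_factors[OF assms(1)]
    by (auto simp: prime_gt_0_nat)
  have "p \<notin> prime_factors q" using assms by auto
  hence "card (prime_factors (p*q)) = Suc (card (prime_factors q))"
    unfolding pf by simp
  thus ?thesis unfolding moebius_def sq by simp
qed

lemma pair_prod:
  fixes J :: "nat set" and T :: nat and x Q :: int
  assumes "finite J" "\<forall>j\<in>J. j < T \<and> T - j \<in> J \<and> 2*j \<noteq> T" "Q dvd x*(x + int T)"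
  shows "Q dvd (\<Prod>j\<in>J. x + int j) - (\<Prod>j\<in>J. int j)"
  using assms(1,2)
proof (induction "card J" arbitrary: J rule: less_induct)
  case less
  show ?case
  proof (cases "J = {}")
    case True thus ?thesis by simp
  next
    case False
    then obtain j where j: "j \<in> J" by blast
    define j' where "j' = T - j"
    have jT: "j < T" "j' \<in> J" "j' \<noteq> j" using less.prems j unfolding j'_def by auto
    define J' where "J' = J - {j, j'}"
    have fin: "finite J'" using less.prems unfolding J'_def by auto
    have card: "card J' < card J" unfolding J'_def using j less.prems(1)
      by (intro psubset_card_mono) auto
    have prp: "\<forall>i\<in>J'. i < T \<and> T - i \<in> J' \<and> 2*i \<noteq> T"
    proof
      fix i assume i: "i \<in> J'"
      hence iJ: "i \<in> J" "i \<noteq> j" "i \<noteq> j'" unfolding J'_def by auto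
      have "i < T" "T - i \<in> J" "2*i \<noteq> T" using less.prems iJ by auto
      moreover have "T - i \<noteq> j" using iJ \<open>i < T\<close> jT unfolding j'_def by auto
      moreover have "T - i \<noteq> j'" using iJ \<open>i < T\<close> jT unfolding j'_def by auto
      ultimately show "i < T \<and> T - i \<in> J' \<and> 2*i \<noteq> T" unfolding J'_def by auto
    qed
    have IH: "Q dvd (\<Prod>i\<in>J'. x + int i) - (\<Prod>i\<in>J'. int i)"
      using less.hyps[OF card fin prp] .
    have split: "\<And>f::nat\<Rightarrow>int. prod f J = f j * f j' * prod f J'"
    proof -
      fix f :: "nat \<Rightarrow> int"
      have "J = insert j (insert j' J')" unfolding J'_def using j jT by auto
      moreover have "j \<notin> insert j' J'" "j' \<notin> J'" using jT unfolding J'_def by auto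
      ultimately show "prod f J = f j * f j' * prod f J'" using fin by simp
    qed
    have e: "(x + int j) * (x + int j') = x*(x + int T) + int j * int j'"
      using jT unfolding j'_def by (simp add: of_nat_diff algebra_simps)
    have d1: "Q dvd (x + int j) * (x + int j') - int j * int j'"
      using e assms(3) by simp
    have "(\<Prod>i\<in>J. x + int i) - (\<Prod>i\<in>J. int i)
        = ((x + int j) * (x + int j') - int j * int j') * (\<Prod>i\<in>J'. x + int i)
          + int j * int j' * ((\<Prod>i\<in>J'. x + int i) - (\<Prod>i\<in>J'. int i))"
      by (simp add: split algebra_simps)
    thus ?thesis using d1 IH by simp
  qed
qed



lemma binom_prod: "int ((a+b) choose b) * fact b = (\<Prod>j\<in>{1..b}. int a + int j)"
proof (induction b)
  case 0 thus ?case by simp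
next
  case (Suc b)
  have e: "Suc b * ((Suc (a+b)) choose Suc b) = Suc (a+b) * ((a+b) choose b)"
    by (rule Suc_times_binomial)
  have "int ((a + Suc b) choose Suc b) * fact (Suc b)
      = int (Suc b * ((Suc (a+b)) choose Suc b)) * fact b"
    by (simp add: algebra_simps)
  also have "\<dots> = int (Suc (a+b)) * (int ((a+b) choose b) * fact b)"
    unfolding e by (simp add: algebra_simps)
  also have "\<dots> = (\<Prod>j\<in>{1..Suc b}. int a + int j)"
    using Suc by (simp add: prod.nat_ivl_Suc' algebra_simps)
  finally show ?case .
qed

lemma fact_int: "(fact n :: int) = (\<Prod>j\<in>{1..n}. int j)"
  by (simp add: fact_prod of_nat_prod)

lemma split_prod:
  fixes p m :: nat and f :: "nat \<Rightarrow> int"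
  assumes "p > 0" "m \<ge> 1"
  shows "(\<Prod>j\<in>{1..p*m-1}. f j) = (\<Prod>j\<in>{j\<in>{1..p*m-1}. \<not> p dvd j}. f j) * (\<Prod>i\<in>{1..m-1}. f (p*i))"
proof -
  have eq: "{j\<in>{1..p*m-1}. p dvd j} = (\<lambda>i. p*i) ` {1..m-1}"
  proof (intro set_eqI iffI)
    fix j assume "j \<in> {j\<in>{1..p*m-1}. p dvd j}"
    then obtain i where i: "j = p*i" "1 \<le> p*i" "p*i \<le> p*m - 1" by auto
    have "i \<ge> 1" using i by (cases i) auto
    moreover have "i < m"
    proof -
      have "p*m \<ge> 1" using assms by simp
      hence "p*i < p*m" using i by linarith
      thus ?thesis using assms by simp
    qed
    ultimately show "j \<in> (\<lambda>i. p*i) ` {1..m-1}" using i by auto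
  next
    fix j assume "j \<in> (\<lambda>i. p*i) ` {1..m-1}"
    then obtain i where i0: "i \<in> {1..m-1}" "j = p*i" by blast
    hence i: "j = p*i" "1 \<le> i" "i \<le> m - 1" by auto
    have "p*i \<ge> 1" using i assms by simp
    moreover have "p*i < p*m"
    proof -
      have "i < m" using i assms by linarith
      thus ?thesis using assms by simp
    qed
    hence "p*i \<le> p*m - 1" by linarith
    ultimately show "j \<in> {j\<in>{1..p*m-1}. p dvd j}" using i by auto
  qed
  have "(\<Prod>j\<in>{1..p*m-1}. f j) = (\<Prod>j\<in>{j\<in>{1..p*m-1}. \<not> p dvd j}. f j) * (\<Prod>j\<in>{j\<in>{1..p*m-1}. p dvd j}. f j)"
  proof -
    define A where "A = {j\<in>{1..p*m-1}. \<not> p dvd j}"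
    define B where "B = {j\<in>{1..p*m-1}. p dvd j}"
    have U: "A \<union> B = {1..p*m-1}" unfolding A_def B_def by blast
    have "prod f (A \<union> B) = prod f A * prod f B"
      by (rule prod.union_disjoint) (auto simp: A_def B_def)
    thus ?thesis unfolding U unfolding A_def B_def .
  qed
  also have "(\<Prod>j\<in>{j\<in>{1..p*m-1}. p dvd j}. f j) = (\<Prod>i\<in>{1..m-1}. f (p*i))"
    unfolding eq using assms by (subst prod.reindex) (auto simp: inj_on_def)
  finally show ?thesis .
qed

definition FF :: "nat \<Rightarrow> nat \<Rightarrow> int" where
  "FF k n = int ((k*n - 1) choose (n - 1))"

lemma FF_prod:
  assumes "k \<ge> 1" "m \<ge> 1"
  shows "FF k m * fact (m-1) = (\<Prod>i\<in>{1..m-1}. int ((k-1)*m) + int i)"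
proof -
  obtain k' where k': "k = Suc k'" using assms by (cases k) auto
  have "k*m - 1 = (k-1)*m + (m-1)" using assms unfolding k' by simp
  thus ?thesis unfolding FF_def using binom_prod[of "(k-1)*m" "m-1"] by simp
qed

lemma key_identity:
  assumes "k \<ge> 1" "m \<ge> 1" "p > 0"
  defines "J \<equiv> {j\<in>{1..p*m-1}. \<not> p dvd j}"
  shows "FF k (p*m) * (\<Prod>j\<in>J. int j) = FF k m * (\<Prod>j\<in>J. int ((k-1)*(p*m)) + int j)"
proof -
  define c where "c = (k-1)*m"
  have pm: "p*m \<ge> 1" using assms by simp
  have A: "FF k (p*m) * fact (p*m-1) = (\<Prod>j\<in>{1..p*m-1}. int (c*p) + int j)"
    using FF_prod[OF assms(1) pm] unfolding c_def by (simp add: ac_simps)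
  also have "\<dots> = (\<Prod>j\<in>J. int (c*p) + int j) * (\<Prod>i\<in>{1..m-1}. int (c*p) + int (p*i))"
    unfolding J_def by (rule split_prod[OF assms(3,2)])
  also have "(\<Prod>i\<in>{1..m-1}. int (c*p) + int (p*i)) = (\<Prod>i\<in>{1..m-1}. int p * (int c + int i))"
    by (simp add: algebra_simps)
  also have "\<dots> = int p ^ (m-1) * (FF k m * fact (m-1))"
    using FF_prod[OF assms(1,2)] unfolding c_def by (simp add: prod.distrib)
  finally have A': "FF k (p*m) * fact (p*m-1) = (\<Prod>j\<in>J. int (c*p) + int j) * (int p ^ (m-1) * (FF k m * fact (m-1)))" .
  have B: "(fact (p*m-1)::int) = (\<Prod>j\<in>J. int j) * (int p ^ (m-1) * fact (m-1))"
    unfolding fact_int J_def split_prod[OF assms(3,2)] by (simp add: prod.distrib)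
  have X: "int p ^ (m-1) * (fact (m-1)::int) \<noteq> 0" using assms by simp
  have "(FF k (p*m) * (\<Prod>j\<in>J. int j)) * (int p ^ (m-1) * fact (m-1))
      = (FF k m * (\<Prod>j\<in>J. int (c*p) + int j)) * (int p ^ (m-1) * fact (m-1))"
    using A' B by (simp add: ac_simps)
  hence "FF k (p*m) * (\<Prod>j\<in>J. int j) = FF k m * (\<Prod>j\<in>J. int (c*p) + int j)"
    using X mult_right_cancel by blast
  moreover have "c*p = (k-1)*(p*m)" unfolding c_def by simp
  ultimately show ?thesis by simp
qed



lemma key_cong:
  fixes p k m s :: nat
  assumes p: "prime p" and k: "k \<ge> 1" and m: "m \<ge> 1" and ps: "p^s dvd p*m"
  shows "\<not>(p = 2 \<and> odd m) \<Longrightarrow> int p^(2*s) dvd FF k (p*m) - FF k m"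
    and "p = 2 \<and> odd m \<Longrightarrow> int p^(2*s) dvd FF k (p*m) - (2*int k - 1) * FF k m"
proof -
  define T where "T = p*m"
  define J where "J = {j\<in>{1..p*m-1}. \<not> p dvd j}"
  define x where "x = int ((k-1)*(p*m))"
  define Q where "Q = int p^(2*s)"
  have p0: "p > 0" using p prime_gt_0_nat by blast
  have T1: "T \<ge> 1" unfolding T_def using p0 m by simp
  have id: "FF k (p*m) * (\<Prod>j\<in>J. int j) = FF k m * (\<Prod>j\<in>J. x + int j)"
    unfolding J_def x_def using key_identity[OF k m p0] by simp
  have finJ: "finite J" unfolding J_def by simp
  have xT: "x * (x + int T) = ((int k - 1) * int k) * (int T)^2"
  proof -
    have xe: "x = (int k - 1) * int T" unfolding x_def T_def using k by (simp add: of_nat_diff)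
    show ?thesis unfolding xe by (simp add: power2_eq_square algebra_simps)
  qed
  have QT: "Q dvd (int T)^2"
  proof -
    have "int (p^s) dvd int T" using ps unfolding T_def by (simp only: int_dvd_int_iff)
    hence "(int (p^s))^2 dvd (int T)^2" by (rule dvd_power_same)
    thus ?thesis unfolding Q_def by (simp add: power_mult[symmetric] mult.commute)
  qed
  have Qx: "Q dvd x * (x + int T)" unfolding xT using QT by simp
  have pJ: "\<And>j. j \<in> J \<Longrightarrow> \<not> p dvd j" unfolding J_def by auto
  have cop: "coprime Q (\<Prod>j\<in>J. int j)"
  proof -
    have "prime (int p)" using p by simp
    have "\<not> int p dvd (\<Prod>j\<in>J. int j)"
    proof
      assume "int p dvd (\<Prod>j\<in>J. int j)"
      then obtain j where "j \<in> J" "int p dvd int j"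
        using prime_dvd_prod_iff[OF finJ \<open>prime (int p)\<close>] by auto
      thus False using pJ by simp
    qed
    hence "coprime (int p) (\<Prod>j\<in>J. int j)"
      using prime_imp_coprime[OF \<open>prime (int p)\<close>] by blast
    thus ?thesis unfolding Q_def by simp
  qed
  have Jmem: "\<And>j. j \<in> J \<Longrightarrow> j < T \<and> T - j \<in> J"
  proof -
    fix j assume j: "j \<in> J"
    hence j1: "1 \<le> j" "j \<le> p*m - 1" "\<not> p dvd j" unfolding J_def by auto
    have "j < T" using j1 T1 unfolding T_def by linarith
    moreover have "\<not> p dvd T - j"
    proof
      assume "p dvd T - j"
      moreover have "p dvd T" unfolding T_def by simp
      ultimately have "p dvd T - (T - j)" by (rule dvd_diff_nat[rotated])
      thus False using \<open>j < T\<close> j1 by simp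
    qed
    ultimately show "j < T \<and> T - j \<in> J" using j1 unfolding J_def T_def by auto
  qed
  {
    assume nf: "\<not>(p = 2 \<and> odd m)"
    have "\<forall>j\<in>J. j < T \<and> T - j \<in> J \<and> 2*j \<noteq> T"
    proof
      fix j assume j: "j \<in> J"
      have "2*j \<noteq> T"
      proof
        assume e: "2*j = T"
        show False
        proof (cases "p = 2")
          case True
          hence "j = m" using e unfolding T_def by simp
          thus False using nf True pJ[OF j] by simp
        next
          case False
          have "p dvd 2*j" using e unfolding T_def by simp
          hence "p dvd 2 \<or> p dvd j" using p prime_dvd_mult_nat by blast
          moreover have "\<not> p dvd 2" using False p
            using primes_dvd_imp_eq[OF p two_is_prime_nat] by blast
          ultimately show False using pJ[OF j] by blast
        qed
      qed
      thus "j < T \<and> T - j \<in> J \<and> 2*j \<noteq> T" using Jmem[OF j] by blast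
    qed
    hence d: "Q dvd (\<Prod>j\<in>J. x + int j) - (\<Prod>j\<in>J. int j)"
      using pair_prod[OF finJ _ Qx] by blast
    have "(FF k (p*m) - FF k m) * (\<Prod>j\<in>J. int j) = FF k m * ((\<Prod>j\<in>J. x + int j) - (\<Prod>j\<in>J. int j))"
      using id by (simp add: algebra_simps)
    hence "Q dvd (FF k (p*m) - FF k m) * (\<Prod>j\<in>J. int j)" using d by simp
    thus "int p^(2*s) dvd FF k (p*m) - FF k m"
      using coprime_dvd_mult_left_iff[OF cop] unfolding Q_def by blast
  }
  {
    assume fp: "p = 2 \<and> odd m"
    have mJ: "m \<in> J" using fp m unfolding J_def by auto
    define J' where "J' = J - {m}"
    have JJ: "J = insert m J'" "m \<notin> J'" "finite J'" using mJ finJ unfolding J'_def by auto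
    have "\<forall>j\<in>J'. j < T \<and> T - j \<in> J' \<and> 2*j \<noteq> T"
    proof
      fix j assume j: "j \<in> J'"
      hence jJ: "j \<in> J" "j \<noteq> m" unfolding J'_def by auto
      have "2*j \<noteq> T" using jJ fp unfolding T_def by simp
      moreover have "T - j \<noteq> m" using jJ fp Jmem[OF jJ(1)] unfolding T_def by auto
      ultimately show "j < T \<and> T - j \<in> J' \<and> 2*j \<noteq> T" using Jmem[OF jJ(1)] unfolding J'_def by auto
    qed
    hence d: "Q dvd (\<Prod>j\<in>J'. x + int j) - (\<Prod>j\<in>J'. int j)"
      using pair_prod[OF JJ(3) _ Qx] by blast
    have xm: "x + int m = (2*int k - 1) * int m"
    proof -
      have "x = (int k - 1) * (2 * int m)" unfolding x_def using fp k by (simp add: of_nat_diff)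
      thus ?thesis by (simp add: algebra_simps)
    qed
    have "(FF k (p*m) - (2*int k - 1) * FF k m) * (\<Prod>j\<in>J. int j)
        = FF k m * ((2*int k - 1) * int m) * ((\<Prod>j\<in>J'. x + int j) - (\<Prod>j\<in>J'. int j))"
      using id JJ xm by (simp add: algebra_simps)
    hence "Q dvd (FF k (p*m) - (2*int k - 1) * FF k m) * (\<Prod>j\<in>J. int j)" using d by simp
    thus "int p^(2*s) dvd FF k (p*m) - (2*int k - 1) * FF k m"
      using coprime_dvd_mult_left_iff[OF cop] unfolding Q_def by blast
  }
qed



lemma fixed_s:
  assumes "odd m" "2^s dvd 2*(m::nat)"
  shows "int 2^(2*s) dvd 4"
proof -
  have "s \<le> 1"
  proof (rule ccontr)
    assume "\<not> s \<le> 1"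
    hence "(2::nat)^2 dvd 2^s" by (intro le_imp_power_dvd) auto
    hence "4 dvd 2*m" using assms(2) dvd_trans by fastforce
    thus False using assms(1) by presburger
  qed
  hence "(2::int)^(2*s) dvd 2^2" by (intro le_imp_power_dvd) auto
  thus ?thesis by simp
qed

lemma g_odd:
  assumes "odd k" "prime p" "m \<ge> 1" "p^s dvd p*m"
  shows "int p^(2*s) dvd FF k (p*m) - FF k m"
proof -
  have k: "k \<ge> 1" using assms(1) by (cases k) auto
  show ?thesis
  proof (cases "p = 2 \<and> odd m")
    case False thus ?thesis using key_cong(1)[OF assms(2) k assms(3,4)] by blast
  next
    case True
    have d1: "int p^(2*s) dvd FF k (p*m) - (2*int k - 1) * FF k m"
      using key_cong(2)[OF assms(2) k assms(3,4) True] .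
    have Q4: "int p^(2*s) dvd 4" using fixed_s[of m s] True assms(4) by simp
    obtain a where a: "k = 2*a+1" using assms(1) oddE by blast
    have "(4::int) dvd (2*int k - 2) * FF k m" using a by simp
    hence d2: "int p^(2*s) dvd (2*int k - 2) * FF k m" using Q4 dvd_trans by blast
    have e: "FF k (p*m) - FF k m = (FF k (p*m) - (2*int k - 1) * FF k m) + (2*int k - 2) * FF k m"
      by (simp add: algebra_simps)
    show ?thesis unfolding e by (rule dvd_add[OF d1 d2])
  qed
qed

lemma g_even:
  assumes "even k" "k \<ge> 1" "prime p" "m \<ge> 1" "p^s dvd p*m"
  shows "int p^(2*s) dvd (-1)^(p*m) * FF k (p*m) - (-1)^m * FF k m"
proof (cases "p = 2 \<and> odd m")
  case False
  have par: "even (p*m) \<longleftrightarrow> even m"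
  proof (cases "p = 2")
    case True thus ?thesis using False by simp
  next
    case False
    hence "p > 2" using prime_ge_2_nat[OF assms(3)] by linarith
    hence "odd p" using prime_odd_nat[OF assms(3)] by blast
    thus ?thesis by simp
  qed
  hence sg: "((-1::int)^(p*m)) = (-1)^m" by (simp only: minus_one_power_iff)
  have d: "int p^(2*s) dvd FF k (p*m) - FF k m"
    using key_cong(1)[OF assms(3,2,4,5) False] .
  have e: "(-1)^(p*m) * FF k (p*m) - (-1)^m * FF k m = (-1)^m * (FF k (p*m) - FF k m)"
    unfolding sg by (simp add: algebra_simps)
  show ?thesis unfolding e by (rule dvd_mult[OF d])
next
  case True
  have d1: "int p^(2*s) dvd FF k (p*m) - (2*int k - 1) * FF k m"
    using key_cong(2)[OF assms(3,2,4,5) True] .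
  have Q4: "int p^(2*s) dvd 4" using fixed_s[of m s] True assms(5) by simp
  obtain a where a: "k = 2*a" using assms(1) by blast
  have "(4::int) dvd (2*int k) * FF k m" using a by simp
  hence d2: "int p^(2*s) dvd (2*int k) * FF k m" using Q4 dvd_trans by blast
  have e: "(-1)^(p*m) * FF k (p*m) - (-1)^m * FF k m = (FF k (p*m) - (2*int k - 1) * FF k m) + (2*int k) * FF k m"
    using True by (simp add: algebra_simps)
  show ?thesis unfolding e by (rule dvd_add[OF d1 d2])
qed



lemma moeb_prime:
  fixes g :: "nat \<Rightarrow> int"
  assumes r: "r \<ge> 1" and p: "prime p"
    and H: "\<And>m s. m \<ge> 1 \<Longrightarrow> p^s dvd p*m \<Longrightarrow> int p^(2*s) dvd g (p*m) - g m"
  shows "int p^(2*multiplicity p r) dvd (\<Sum>d | d dvd r. moebius (r div d) * g d)"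
proof -
  define s where "s = multiplicity p r"
  define D where "D = {d. d dvd r}"
  have r0: "r \<noteq> 0" using r by simp
  have pe: "prime_elem p" using p by simp
  have pu: "\<not> is_unit p" using prime_gt_1_nat[OF p] by simp
  have p0: "p > 0" using p prime_gt_0_nat by blast
  have PD: "\<And>n x. x \<noteq> 0 \<Longrightarrow> p^n dvd x \<longleftrightarrow> n \<le> multiplicity p x"
    using power_dvd_iff_le_multiplicity pu by blast
  have finD: "finite D" unfolding D_def using r by simp
  have D0: "\<And>d. d \<in> D \<Longrightarrow> d \<noteq> 0 \<and> r div d \<noteq> 0 \<and> r = d * (r div d)"
    unfolding D_def using r0 by auto
  have mult_split: "\<And>d. d \<in> D \<Longrightarrow> multiplicity p d + multiplicity p (r div d) = s"
  proof -
    fix d assume d: "d \<in> D"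
    have "multiplicity p (d * (r div d)) = multiplicity p d + multiplicity p (r div d)"
      using D0[OF d] prime_elem_multiplicity_mult_distrib[OF pe] by blast
    thus "multiplicity p d + multiplicity p (r div d) = s"
      unfolding s_def using D0[OF d] by simp
  qed
  show ?thesis
  proof (cases "s = 0")
    case True thus ?thesis unfolding s_def by simp
  next
    case False
    have ps: "p^s = p * p^(s-1)" using False by (cases s) auto
    define A where "A = {d\<in>D. p^s dvd d}"
    define B where "B = {d\<in>D. p^(s-1) dvd d \<and> \<not> p^s dvd d}"
    define C where "C = {d\<in>D. \<not> p^(s-1) dvd d}"
    define h where "h = (\<lambda>d. moebius (r div d) * g d)"
    have DABC: "D = A \<union> (B \<union> C)" unfolding A_def B_def C_def by auto
    have fA: "finite A" "finite B" "finite C" using finD unfolding A_def B_def C_def by auto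
    have psub: "\<And>d. p^s dvd d \<Longrightarrow> p^(s-1) dvd d"
      using ps by (metis dvd_mult_right)
    have sumD: "sum h D = sum h A + (sum h B + sum h C)"
    proof -
      have d1: "A \<inter> (B \<union> C) = {}" unfolding A_def B_def C_def using psub by blast
      have d2: "B \<inter> C = {}" unfolding B_def C_def by blast
      show ?thesis unfolding DABC using fA d1 d2
        by (simp add: sum.union_disjoint)
    qed
    have C0: "sum h C = 0"
    proof (rule sum.neutral, rule ballI)
      fix d assume d: "d \<in> C"
      hence dD: "d \<in> D" and nd: "\<not> p^(s-1) dvd d" unfolding C_def by auto
      have "multiplicity p d < s - 1" using nd PD[of d "s-1"] D0[OF dD] by linarith
      hence "2 \<le> multiplicity p (r div d)" using mult_split[OF dD] by linarith
      hence "p^2 dvd r div d" using PD[of "r div d" 2] D0[OF dD] by blast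
      thus "h d = 0" unfolding h_def using moeb_zero[OF p] by simp
    qed
    have Aprops: "\<And>d. d \<in> A \<Longrightarrow> \<exists>e q. d = p*e \<and> r = d*q \<and> e \<ge> 1 \<and> \<not> p dvd q \<and> p^s dvd d"
    proof -
      fix d assume d: "d \<in> A"
      hence dD: "d \<in> D" and d1: "p^s dvd d" unfolding A_def by auto
      have "p dvd d" using d1 ps by (metis dvd_mult_left)
      then obtain e where e: "d = p*e" by blast
      have "e \<ge> 1" using D0[OF dD] e by (cases e) auto
      have "multiplicity p d \<ge> s" using d1 PD[of d s] D0[OF dD] by blast
      hence "multiplicity p (r div d) = 0" using mult_split[OF dD] by linarith
      hence "\<not> p dvd (r div d)" using PD[of "r div d" 1] D0[OF dD] by simp
      thus "\<exists>e q. d = p*e \<and> r = d*q \<and> e \<ge> 1 \<and> \<not> p dvd q \<and> p^s dvd d"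
        using e \<open>e \<ge> 1\<close> D0[OF dD] d1 by blast
    qed
    have BA: "\<And>d. d \<in> B \<Longrightarrow> p*d \<in> A"
    proof -
      fix d assume d: "d \<in> B"
      hence dD: "d \<in> D" and d1: "p^(s-1) dvd d" "\<not> p^s dvd d" unfolding B_def by auto
      have "s - 1 \<le> multiplicity p d" "\<not> s \<le> multiplicity p d"
        using d1 PD[of d] D0[OF dD] by auto
      hence "multiplicity p (r div d) \<ge> 1" using mult_split[OF dD] by linarith
      hence "p dvd r div d" using PD[of "r div d" 1] D0[OF dD] by simp
      hence "p*d dvd d * (r div d)" by (simp add: mult.commute)
      hence "p*d dvd r" using D0[OF dD] by simp
      moreover have "p^s dvd p*d" using d1 ps by simp
      ultimately show "p*d \<in> A" unfolding A_def D_def by simp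
    qed
    have AB: "sum h B = (\<Sum>d\<in>A. - moebius (r div d) * g (d div p))"
    proof (rule sum.reindex_bij_witness[where j="\<lambda>d. p*d" and i="\<lambda>d. d div p"])
      fix d assume "d \<in> B"
      thus "p*d div p = d" using p0 by simp
    next
      fix d assume "d \<in> B"
      thus "p*d \<in> A" by (rule BA)
    next
      fix d assume d: "d \<in> A"
      then obtain e q where "d = p*e" by (meson Aprops)
      thus "p * (d div p) = d" using p0 by simp
    next
      fix d assume d: "d \<in> A"
      then obtain e q where eq: "d = p*e" "r = d*q" "e \<ge> 1" "\<not> p dvd q" "p^s dvd d"
        using Aprops by blast
      have "e dvd r" using eq by simp
      moreover have "p^(s-1) dvd e" using eq ps p0 by simp
      moreover have "\<not> p^s dvd e"
      proof
        assume "p^s dvd e"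
        hence "p^Suc s dvd r" using eq by (simp add: mult_dvd_mono)
        thus False using PD[of r "Suc s"] r0 unfolding s_def by simp
      qed
      ultimately show "d div p \<in> B" unfolding B_def D_def using eq p0 by simp
    next
      fix a assume a: "a \<in> B"
      define d where "d = p*a"
      have d: "d \<in> A" unfolding d_def using BA[OF a] .
      then obtain e q where eq: "d = p*e" "r = d*q" "e \<ge> 1" "\<not> p dvd q" "p^s dvd d"
        using Aprops by blast
      have q0: "q > 0" using eq r0 by (cases q) auto
      have ea: "e = a" using eq p0 unfolding d_def by simp
      have "r div a = p * q" using eq p0 ea by simp
      moreover have "r div d = q" using eq p0 by simp
      moreover have "d div p = a" unfolding d_def using p0 by simp
      ultimately show "- moebius (r div (p*a)) * g (p*a div p) = h a"
        unfolding h_def d_def[symmetric] using moeb_mult[OF p eq(4) q0] by simp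
    qed
    have "sum h D = (\<Sum>d\<in>A. moebius (r div d) * (g d - g (d div p)))"
    proof -
      have "sum h D = sum h A + (\<Sum>d\<in>A. - moebius (r div d) * g (d div p))"
        using sumD C0 AB by simp
      also have "\<dots> = (\<Sum>d\<in>A. moebius (r div d) * (g d - g (d div p)))"
        unfolding sum.distrib[symmetric] h_def by (rule sum.cong) (auto simp: algebra_simps)
      finally show ?thesis .
    qed
    moreover have "int p^(2*s) dvd (\<Sum>d\<in>A. moebius (r div d) * (g d - g (d div p)))"
    proof (rule dvd_sum)
      fix d assume d: "d \<in> A"
      then obtain e q where eq: "d = p*e" "r = d*q" "e \<ge> 1" "\<not> p dvd q" "p^s dvd d"
        using Aprops by blast
      hence "int p^(2*s) dvd g (p*e) - g e" using H by blast
      moreover have "d div p = e" using eq p0 by simp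
      ultimately show "int p^(2*s) dvd moebius (r div d) * (g d - g (d div p))" using eq by simp
    qed
    ultimately show ?thesis unfolding s_def D_def h_def by simp
  qed
qed

lemma moeb_sum_dvd:
  fixes g :: "nat \<Rightarrow> int"
  assumes r: "r \<ge> 1"
    and H: "\<And>p m s. prime p \<Longrightarrow> m \<ge> 1 \<Longrightarrow> p^s dvd p*m \<Longrightarrow> int p^(2*s) dvd g (p*m) - g m"
  shows "int (r^2) dvd (\<Sum>d | d dvd r. moebius (r div d) * g d)"
proof -
  define S where "S = (\<Sum>d | d dvd r. moebius (r div d) * g d)"
  show ?thesis
  proof (cases "S = 0")
    case True thus ?thesis unfolding S_def by simp
  next
    case False
    have "r^2 dvd nat \<bar>S\<bar>"
    proof (rule multiplicity_le_imp_dvd)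
      show "r^2 \<noteq> 0" using r by simp
    next
      fix p :: nat assume p: "prime p"
      have "int p^(2*multiplicity p r) dvd S" unfolding S_def
        using moeb_prime[OF r p] H[OF p] by blast
      hence "int (p^(2*multiplicity p r)) dvd \<bar>S\<bar>" by simp
      hence "int (p^(2*multiplicity p r)) dvd int (nat \<bar>S\<bar>)" by simp
      hence "p^(2*multiplicity p r) dvd nat \<bar>S\<bar>" by (simp only: int_dvd_int_iff)
      moreover have "nat \<bar>S\<bar> \<noteq> 0" using False by simp
      ultimately have "2*multiplicity p r \<le> multiplicity p (nat \<bar>S\<bar>)"
        using power_dvd_iff_le_multiplicity p by (metis not_prime_unit)
      moreover have "multiplicity p (r^2) = 2*multiplicity p r"
        using prime_elem_multiplicity_power_distrib[of p r 2] p r by simp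
      ultimately show "multiplicity p (r^2) \<le> multiplicity p (nat \<bar>S\<bar>)" by simp
    qed
    hence "int (r^2) dvd int (nat \<bar>S\<bar>)" by (simp only: int_dvd_int_iff)
    hence "int (r^2) dvd \<bar>S\<bar>" by simp
    thus ?thesis unfolding S_def by simp
  qed
qed

lemma rat_int_helper:
  assumes "r \<ge> 1" "int (r^2) dvd S"
  shows "(1 / of_nat (r^2)) * (of_int S :: rat) \<in> \<int>"
proof -
  obtain t where t: "S = int (r^2) * t" using assms(2) by blast
  have "(of_nat (r^2) :: rat) \<noteq> 0" using assms(1) by simp
  hence "(1 / of_nat (r^2)) * (of_int S :: rat) = of_int t" unfolding t by simp
  thus ?thesis by simp
qed

lemma FF_odd_dvd:
  assumes "odd k" "r \<ge> 1"
  shows "int (r^2) dvd (\<Sum>d | d dvd r. moebius (r div d) * FF k d)"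
  using moeb_sum_dvd[OF assms(2)] g_odd[OF assms(1)] by blast

lemma FF_even_dvd:
  assumes "even k" "k \<ge> 1" "r \<ge> 1"
  shows "int (r^2) dvd (\<Sum>d | d dvd r. moebius (r div d) * ((-1)^d * FF k d))"
  using moeb_sum_dvd[OF assms(3), of "\<lambda>d. (-1)^d * FF k d"] g_even[OF assms(1,2)] by blast

theorem theorem6p1:
  fixes p :: int and r :: nat
  assumes "p \<le> -1 \<or> p \<ge> 2"
    and "r \<ge> 1"
  shows "b_minus p r \<in> \<int> \<and> b_plus p r \<in> \<int>"
proof (cases "p \<le> -1")
  case True
  define k where "k = 2 * nat \<bar>p\<bar> + 1"
  have e1: "(\<Sum>d | d dvd r. of_int (moebius (r div d)) * of_nat ((3*d - 1) choose (d - 1)) :: rat)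
      = of_int (\<Sum>d | d dvd r. moebius (r div d) * FF 3 d)"
    by (simp add: FF_def of_int_sum)
  have e2: "(\<Sum>d | d dvd r. of_int (moebius (r div d)) * of_nat (((2 * nat \<bar>p\<bar> + 1)*d - 1) choose (d - 1)) :: rat)
      = of_int (\<Sum>d | d dvd r. moebius (r div d) * FF k d)"
    by (simp add: FF_def of_int_sum k_def)
  have "odd k" unfolding k_def by simp
  have i1: "(1 / of_nat (r^2)) * (of_int (\<Sum>d | d dvd r. moebius (r div d) * FF 3 d) :: rat) \<in> \<int>"
    by (rule rat_int_helper[OF assms(2) FF_odd_dvd[OF _ assms(2)]]) simp
  have i2: "(1 / of_nat (r^2)) * (of_int (\<Sum>d | d dvd r. moebius (r div d) * FF k d) :: rat) \<in> \<int>"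
    by (rule rat_int_helper[OF assms(2) FF_odd_dvd[OF \<open>odd k\<close> assms(2)]])
  have "b_minus p r = - ((1 / of_nat (r^2)) * (of_int (\<Sum>d | d dvd r. moebius (r div d) * FF 3 d) :: rat))"
    unfolding b_minus_def using True e1 by simp
  moreover have "b_plus p r = (1 / of_nat (r^2)) * (of_int (\<Sum>d | d dvd r. moebius (r div d) * FF k d) :: rat)"
    unfolding b_plus_def using True e2 by simp
  ultimately show ?thesis using i1 i2 by simp
next
  case False
  hence p2: "p \<ge> 2" using assms(1) by simp
  define k where "k = 2 * nat p + 2"
  have e1: "(\<Sum>d | d dvd r. of_int (moebius (r div d)) * (-1)^(d+1) * of_nat ((2*d - 1) choose (d - 1)) :: rat)
      = - of_int (\<Sum>d | d dvd r. moebius (r div d) * ((-1)^d * FF 2 d))"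
    by (simp add: FF_def of_int_sum sum_negf[symmetric] mult.assoc)
  have e2: "(\<Sum>d | d dvd r. of_int (moebius (r div d)) * (-1)^d * of_nat (((2 * nat p + 2)*d - 1) choose (d - 1)) :: rat)
      = of_int (\<Sum>d | d dvd r. moebius (r div d) * ((-1)^d * FF k d))"
    by (simp add: FF_def of_int_sum k_def mult.assoc)
  have "even k" "k \<ge> 1" unfolding k_def by simp_all
  have i1: "(1 / of_nat (r^2)) * (of_int (\<Sum>d | d dvd r. moebius (r div d) * ((-1)^d * FF 2 d)) :: rat) \<in> \<int>"
    by (rule rat_int_helper[OF assms(2) FF_even_dvd[OF _ _ assms(2)]]) simp_all
  have i2: "(1 / of_nat (r^2)) * (of_int (\<Sum>d | d dvd r. moebius (r div d) * ((-1)^d * FF k d)) :: rat) \<in> \<int>"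
    by (rule rat_int_helper[OF assms(2) FF_even_dvd[OF \<open>even k\<close> \<open>k \<ge> 1\<close> assms(2)]])
  have "b_minus p r = (1 / of_nat (r^2)) * (of_int (\<Sum>d | d dvd r. moebius (r div d) * ((-1)^d * FF 2 d)) :: rat)"
    unfolding b_minus_def using False e1 by simp
  moreover have "b_plus p r = (1 / of_nat (r^2)) * (of_int (\<Sum>d | d dvd r. moebius (r div d) * ((-1)^d * FF k d)) :: rat)"
    unfolding b_plus_def using False e2 by simp
  ultimately show ?thesis using i1 i2 by simp
qed

end
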